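(* Let $T$ be a self-affine lattice tile with neighbor graph $G=(V,E)$, and let $u,v\in V\setminus\{0\}$ with $u\succ v$. Then $\dim B_u\ge\dim B_v$, where $\dim$ denotes any of topological dimension, Hausdorff dimension, or (upper/lower) box dimension. Moreover, if $B_v$ is a face of $T$, then $B_u$ is a face of $T$.
   Context: Setting: $M$ is an $n\times n$ integer matrix all of whose eigenvalues have modulus $>1$, $m=|\det M|$, $k_1,\dots,k_m\in\mathbb R^n$ with $k_j-k_1\in\mathbb Z^n$ forming a complete set of residues of $\mathbb Z^n$ modulo $M\mathbb Z^n$; $f_j(x)=M^{-1}(x+k_j)$, $T=\bigcup_j f_j(T)$ compact nonempty. $B_k=T\cap(T+k)$. Neighbor graph $G=(V,E)$: $V=\{k\in\mathbb Z^n:B_k\ne\emptyset\}$; for $k,k'\in V$, an edge from $k$ to $k'$ with label $i$ iff $k'=Mk+k_j-k_i$ for some $j$. For vertices $u,v$ write $u\succ v$ if there is a directed path in $G$ from $u$ to $v$. $B_k$ ($k\ne0$) is a face of $T$ if there are $x\in B_k$ and an open neighborhood $U$ of $x$ with $U\cap\partial T\subseteq B_k$ and $U\subseteq T\cup(T+k)$. *)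

theory Defs
  imports "HOL-Analysis.Analysis" "HOL-Library.Liminf_Limsup"
begin

definition Zn :: "(real^'n) set" where
  "Zn = {x. \<forall>i. x $ i \<in> \<int>}"

definition int_matrix :: "real^'n^'n \<Rightarrow> bool" where
  "int_matrix M \<longleftrightarrow> (\<forall>i j. M $ i $ j \<in> \<int>)"

definition cmat :: "real^'n^'n \<Rightarrow> complex^'n^'n" where
  "cmat M = (\<chi> i j. complex_of_real (M $ i $ j))"

definition expanding :: "real^'n^'n \<Rightarrow> bool" where
  "expanding M \<longleftrightarrow>
     (\<forall>(lam::complex) (w::complex^'n). w \<noteq> 0 \<and> cmat M *v w = lam *s w \<longrightarrow> cmod lam > 1)"

definition complete_residues :: "real^'n^'n \<Rightarrow> nat \<Rightarrow> (nat \<Rightarrow> real^'n) \<Rightarrow> bool" where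
  "complete_residues M m k \<longleftrightarrow>
     (\<forall>j<m. k j - k 0 \<in> Zn) \<and>
     (\<forall>z\<in>Zn. \<exists>!j. j < m \<and> z - (k j - k 0) \<in> (\<lambda>w. M *v w) ` Zn)"

definition translate :: "(real^'n) set \<Rightarrow> real^'n \<Rightarrow> (real^'n) set" where
  "translate T k = (\<lambda>x. x + k) ` T"

definition Bset :: "(real^'n) set \<Rightarrow> real^'n \<Rightarrow> (real^'n) set" where
  "Bset T k = T \<inter> translate T k"

definition lattice_tiling :: "(real^'n) set \<Rightarrow> bool" where
  "lattice_tiling T \<longleftrightarrow>
     (\<Union>k\<in>Zn. translate T k) = UNIV \<and>
     (\<forall>k\<in>Zn. k \<noteq> 0 \<longrightarrow> interior T \<inter> interior (translate T k) = {})"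

definition self_affine_lattice_tile ::
  "real^'n^'n \<Rightarrow> nat \<Rightarrow> (nat \<Rightarrow> real^'n) \<Rightarrow> (real^'n) set \<Rightarrow> bool" where
  "self_affine_lattice_tile M m k T \<longleftrightarrow>
     int_matrix M \<and> expanding M \<and> m = nat \<bar>\<lfloor>det M\<rfloor>\<bar> \<and> complete_residues M m k \<and>
     compact T \<and> T \<noteq> {} \<and>
     T = (\<Union>j<m. (\<lambda>x. matrix_inv M *v (x + k j)) ` T) \<and>
     lattice_tiling T"

definition nb_vertices :: "(real^'n) set \<Rightarrow> (real^'n) set" where
  "nb_vertices T = {k \<in> Zn. Bset T k \<noteq> {}}"

definition nb_edges ::
  "real^'n^'n \<Rightarrow> nat \<Rightarrow> (nat \<Rightarrow> real^'n) \<Rightarrow> (real^'n) set \<Rightarrow> ((real^'n) \<times> (real^'n)) set" where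
  "nb_edges M m k T =
     {(a, b). a \<in> nb_vertices T \<and> b \<in> nb_vertices T \<and>
              (\<exists>i<m. \<exists>j<m. b = M *v a + k j - k i)}"

definition nb_succ ::
  "real^'n^'n \<Rightarrow> nat \<Rightarrow> (nat \<Rightarrow> real^'n) \<Rightarrow> (real^'n) set \<Rightarrow> real^'n \<Rightarrow> real^'n \<Rightarrow> bool" where
  "nb_succ M m k T u v \<longleftrightarrow> (u, v) \<in> (nb_edges M m k T)\<^sup>*"

definition is_face :: "(real^'n) set \<Rightarrow> real^'n \<Rightarrow> bool" where
  "is_face T k \<longleftrightarrow> k \<noteq> 0 \<and>
     (\<exists>x\<in>Bset T k. \<exists>U. open U \<and> x \<in> U \<and> U \<inter> frontier T \<subseteq> Bset T k \<and>
                       U \<subseteq> T \<union> translate T k)"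

definition hausdorff_pre :: "real \<Rightarrow> real \<Rightarrow> 'a::metric_space set \<Rightarrow> ennreal" where
  "hausdorff_pre s \<delta> A =
     (INF U \<in> {U :: nat \<Rightarrow> 'a set. A \<subseteq> (\<Union>i. U i) \<and> (\<forall>i. bounded (U i) \<and> diameter (U i) \<le> \<delta>)}.
        (\<Sum>i. ennreal (diameter (U i) powr s)))"

definition hausdorff_measure :: "real \<Rightarrow> 'a::metric_space set \<Rightarrow> ennreal" where
  "hausdorff_measure s A = (SUP \<delta> \<in> {0<..}. hausdorff_pre s \<delta> A)"

definition hausdorff_dim :: "'a::metric_space set \<Rightarrow> ereal" where
  "hausdorff_dim A = Inf {ereal s | s. s \<ge> 0 \<and> hausdorff_measure s A = 0}"

definition cover_number :: "real \<Rightarrow> 'a::metric_space set \<Rightarrow> nat" where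
  "cover_number \<delta> A =
     Inf {card F | F. finite F \<and> A \<subseteq> \<Union>F \<and> (\<forall>U\<in>F. bounded U \<and> diameter U \<le> \<delta>)}"

definition upper_box_dim :: "'a::metric_space set \<Rightarrow> ereal" where
  "upper_box_dim A = Limsup (at_right 0) (\<lambda>\<delta>. ereal (ln (real (cover_number \<delta> A)) / - ln \<delta>))"

definition lower_box_dim :: "'a::metric_space set \<Rightarrow> ereal" where
  "lower_box_dim A = Liminf (at_right 0) (\<lambda>\<delta>. ereal (ln (real (cover_number \<delta> A)) / - ln \<delta>))"

definition covdim_le :: "'a::topological_space set \<Rightarrow> int \<Rightarrow> bool" where
  "covdim_le S n \<longleftrightarrow>
     (\<forall>\<U>. finite \<U> \<and> (\<forall>U\<in>\<U>. openin (top_of_set S) U) \<and> S \<subseteq> \<Union>\<U> \<longrightarrow>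
        (\<exists>\<V>. finite \<V> \<and> (\<forall>V\<in>\<V>. openin (top_of_set S) V) \<and> S \<subseteq> \<Union>\<V> \<and>
             (\<forall>V\<in>\<V>. \<exists>U\<in>\<U>. V \<subseteq> U) \<and>
             (\<forall>x\<in>S. card {V\<in>\<V>. x \<in> V} \<le> nat (n + 1))))"

definition topological_dim :: "'a::topological_space set \<Rightarrow> ereal" where
  "topological_dim S = Inf {ereal (real_of_int n) | n. n \<ge> -1 \<and> covdim_le S n}"

end

theory Submission
  imports Defs
begin



definition aff :: "(real^'n \<Rightarrow> real^'n) \<Rightarrow> bool" where
  "aff g \<longleftrightarrow> (\<exists>A c. invertible A \<and> g = (\<lambda>x. A *v x + c))"

lemma matrix_inv_props:
  assumes "invertible (A::real^'n^'n)"
  shows "matrix_inv A ** A = mat 1" "A ** matrix_inv A = mat 1" "invertible (matrix_inv A)"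
proof -
  have "\<exists>A'. A ** A' = mat 1 \<and> A' ** A = mat 1" using assms by (simp add: invertible_def)
  hence *: "A ** matrix_inv A = mat 1 \<and> matrix_inv A ** A = mat 1"
    unfolding matrix_inv_def by (rule someI_ex)
  thus "matrix_inv A ** A = mat 1" "A ** matrix_inv A = mat 1" by auto
  show "invertible (matrix_inv A)" using * unfolding invertible_def by blast
qed

lemma aff_comp: "aff g \<Longrightarrow> aff f \<Longrightarrow> aff (g \<circ> f)"
proof -
  assume "aff g" "aff f"
  then obtain A c B d where A: "invertible A" "g = (\<lambda>x. A *v x + c)"
    and B: "invertible B" "f = (\<lambda>x. B *v x + d)" unfolding aff_def by blast
  have "g \<circ> f = (\<lambda>x. (A ** B) *v x + (A *v d + c))"
    using A B by (auto simp: fun_eq_iff matrix_vector_mul_assoc matrix_vector_right_distrib)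
  thus ?thesis using invertible_mult[OF A(1) B(1)] unfolding aff_def by blast
qed

lemma aff_id: "aff id"
  unfolding aff_def by (rule exI[of _ "mat 1"], rule exI[of _ 0])
    (auto simp: invertible_def fun_eq_iff matrix_vector_mul_lid)

lemma aff_inv:
  assumes "aff g"
  shows "\<exists>h C. C \<ge> 1 \<and> (\<forall>x y. dist (h x) (h y) \<le> C * dist x y) \<and> (\<forall>x. h (g x) = x) \<and> (\<forall>y. g (h y) = y)
      \<and> continuous_on UNIV h \<and> continuous_on UNIV g"
proof -
  obtain A c where A: "invertible A" "g = (\<lambda>x. A *v x + c)" using assms unfolding aff_def by blast
  define B where "B = matrix_inv A"
  note P = matrix_inv_props[OF A(1), folded B_def]
  define h where "h = (\<lambda>y. B *v (y - c))"
  have bl: "bounded_linear (\<lambda>x. B *v x)" by (simp add: matrix_vector_mul_bounded_linear)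
  then obtain K where K: "\<And>x. norm (B *v x) \<le> norm x * K" "K > 0"
    using bounded_linear.pos_bounded by blast
  have "\<forall>x y. dist (h x) (h y) \<le> max 1 K * dist x y"
  proof (intro allI)
    fix x y
    have "dist (h x) (h y) = norm (B *v (x - y))"
      by (simp add: h_def dist_norm matrix_vector_mult_diff_distrib[symmetric])
    also have "\<dots> \<le> norm (x - y) * K" by (rule K)
    also have "\<dots> \<le> max 1 K * dist x y" by (simp add: dist_norm mult.commute mult_right_mono)
    finally show "dist (h x) (h y) \<le> max 1 K * dist x y" .
  qed
  moreover have "\<forall>x. h (g x) = x" using P
    by (simp add: h_def A(2) matrix_vector_mul_assoc)
  moreover have "\<forall>y. g (h y) = y" using P
    by (simp add: h_def A(2) matrix_vector_mul_assoc)
  moreover have "continuous_on UNIV h" unfolding h_def matrix_vector_mult_diff_distrib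
    by (intro continuous_intros linear_continuous_on bl)
  moreover have "continuous_on UNIV g" unfolding A(2)
    by (intro continuous_intros linear_continuous_on matrix_vector_mul_bounded_linear)
  ultimately show ?thesis by (intro exI[of _ h] exI[of _ "max 1 K"]) auto
qed


lemma expanding_invertible:
  assumes "expanding (M::real^'n^'n)" shows "invertible M"
proof (rule ccontr)
  assume "\<not> invertible M"
  hence "\<not> (\<forall>x. M *v x = 0 \<longrightarrow> x = 0)"
    using invertible_left_inverse matrix_left_invertible_ker by blast
  then obtain x where x: "M *v x = 0" "x \<noteq> 0" by blast
  define w :: "complex^'n" where "w = (\<chi> i. complex_of_real (x $ i))"
  have "w \<noteq> 0"
  proof
    assume "w = 0"
    hence "\<forall>i. x $ i = 0" by (auto simp: w_def vec_eq_iff)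
    thus False using x(2) by (auto simp: vec_eq_iff)
  qed
  moreover have "cmat M *v w = 0 *s w"
  proof -
    have "\<And>i. (cmat M *v w) $ i = complex_of_real ((M *v x) $ i)"
      by (simp add: cmat_def w_def matrix_vector_mult_def)
    thus ?thesis using x(1) by (simp add: vec_eq_iff)
  qed
  ultimately have "cmod 0 > 1" using assms unfolding expanding_def by blast
  thus False by simp
qed

lemma edge_map:
  assumes tile: "self_affine_lattice_tile M m k T"
    and e: "(a, b) \<in> nb_edges M m k T"
  shows "\<exists>f. aff f \<and> f ` T \<subseteq> T \<and> f ` translate T b \<subseteq> translate T a"
proof -
  have inv: "invertible M" using tile expanding_invertible unfolding self_affine_lattice_tile_def by blast
  define N where "N = matrix_inv M"
  note P = matrix_inv_props[OF inv, folded N_def]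
  have TT: "T = (\<Union>j<m. (\<lambda>x. N *v (x + k j)) ` T)" using tile
    unfolding self_affine_lattice_tile_def N_def by blast
  obtain i j where ij: "i < m" "j < m" "b = M *v a + k j - k i"
    using e unfolding nb_edges_def by blast
  define f where "f = (\<lambda>x. N *v (x + k i))"
  have "aff f" unfolding aff_def f_def
    by (rule exI[of _ N], rule exI[of _ "N *v k i"]) (auto simp: P matrix_vector_right_distrib)
  moreover have "f ` T \<subseteq> T" unfolding f_def using ij(1) by (subst (2) TT) blast
  moreover have "f ` translate T b \<subseteq> translate T a"
  proof
    fix y assume "y \<in> f ` translate T b"
    then obtain t where t: "t \<in> T" "y = f (t + b)" unfolding translate_def by blast
    have "y = N *v (t + k j) + N *v (M *v a)"
      using t(2) ij(3) by (simp add: f_def matrix_vector_right_distrib algebra_simps)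
    also have "N *v (M *v a) = a" using P by (simp add: matrix_vector_mul_assoc)
    finally have "y = N *v (t + k j) + a" .
    moreover have "N *v (t + k j) \<in> T" using ij(2) t(1) by (subst TT) blast
    ultimately show "y \<in> translate T a" unfolding translate_def by blast
  qed
  ultimately show ?thesis by blast
qed

lemma path_map:
  assumes tile: "self_affine_lattice_tile M m k T"
    and uv: "nb_succ M m k T u v"
  shows "\<exists>g. aff g \<and> g ` T \<subseteq> T \<and> g ` translate T v \<subseteq> translate T u"
  using uv unfolding nb_succ_def
proof (induction rule: rtrancl_induct)
  case base
  then show ?case using aff_id by (metis id_apply image_id order_refl)
next
  case (step b c)
  obtain g where g: "aff g" "g ` T \<subseteq> T" "g ` translate T b \<subseteq> translate T u" using step.IH by blast
  obtain f where f: "aff f" "f ` T \<subseteq> T" "f ` translate T c \<subseteq> translate T b"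
    using edge_map[OF tile step.hyps(2)] by blast
  have "aff (g \<circ> f)" using aff_comp g f by blast
  moreover have "(g \<circ> f) ` T \<subseteq> T" using g f by (metis (no_types, lifting) image_comp image_mono order_trans)
  moreover have "(g \<circ> f) ` translate T c \<subseteq> translate T u" using g f
    by (metis (no_types, lifting) image_comp image_mono order_trans)
  ultimately show ?case by blast
qed

lemma aff_open: "aff g \<Longrightarrow> open U \<Longrightarrow> open (g ` U)"
proof -
  assume "aff g" "open U"
  then obtain h C where h: "\<forall>x. h (g x) = x" "\<forall>y. g (h y) = y" "continuous_on UNIV h"
    using aff_inv by blast
  have "g ` U = h -` U" using h by (auto, metis image_eqI)
  thus ?thesis using h(3) \<open>open U\<close> by (simp add: continuous_on_open_vimage)
qed

lemma face_part:
  assumes tile: "self_affine_lattice_tile M m k T" and u0: "u \<noteq> 0"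
    and g: "aff g" "g ` T \<subseteq> T" "g ` translate T v \<subseteq> translate T u"
    and face: "is_face T v"
  shows "is_face T u"
proof -
  have cT: "closed T" using tile unfolding self_affine_lattice_tile_def by (simp add: compact_imp_closed)
  obtain x U where xU: "x \<in> Bset T v" "open U" "x \<in> U" "U \<inter> frontier T \<subseteq> Bset T v"
    "U \<subseteq> T \<union> translate T v" using face unfolding is_face_def by blast
  have "g x \<in> Bset T u" using xU(1) g unfolding Bset_def by blast
  moreover have "open (g ` U)" using aff_open g(1) xU(2) .
  moreover have "g x \<in> g ` U" using xU(3) by blast
  moreover have "g ` U \<subseteq> T \<union> translate T u" using xU(5) g by blast
  moreover have "g ` U \<inter> frontier T \<subseteq> Bset T u"
  proof
    fix y assume y: "y \<in> g ` U \<inter> frontier T"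
    then obtain z where z: "z \<in> U" "y = g z" by blast
    have yT: "y \<in> T" using y cT by (metis IntD2 closure_closed frontier_def DiffD1)
    show "y \<in> Bset T u"
    proof (cases "z \<in> translate T v")
      case True thus ?thesis using g(3) z yT unfolding Bset_def by blast
    next
      case False
      hence zT: "z \<in> T" using z xU(5) by blast
      have "z \<notin> frontier T" using False xU(4) z(1) unfolding Bset_def by blast
      hence zi: "z \<in> interior T" using zT cT by (simp add: frontier_def closure_closed)
      have "open (g ` interior T)" using aff_open g(1) by blast
      moreover have "g ` interior T \<subseteq> T" using g(2) interior_subset by blast
      ultimately have "g ` interior T \<subseteq> interior T" by (simp add: interior_maximal)
      hence "y \<in> interior T" using zi z by blast
      thus ?thesis using y by (simp add: frontier_def)
    qed
  qed
  ultimately show ?thesis using u0 unfolding is_face_def by blast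
qed



lemma ev_factor:
  fixes a b :: "real \<Rightarrow> real"
  assumes C: "C \<ge> 1" and ab: "\<And>d. d > 0 \<Longrightarrow> a d \<le> b (d / C)" and b0: "\<And>d. d > 0 \<Longrightarrow> b d \<ge> 0"
    and e: "e > 0"
  shows "eventually (\<lambda>d. ereal (a d / - ln d) \<le> ereal (b ((1/C) * d) / - ln ((1/C) * d)) * ereal (1 + e)) (at_right 0)"
proof -
  define r where "r = min 1 (exp (- ln C / e))"
  have r: "r > 0" unfolding r_def by simp
  have "\<forall>d>0. d < r \<longrightarrow> ereal (a d / - ln d) \<le> ereal (b ((1/C) * d) / - ln ((1/C) * d)) * ereal (1 + e)"
  proof (intro allI impI)
    fix d :: real assume d: "d > 0" "d < r"
    have d1: "d < 1" using d r_def by simp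
    have lnd: "- ln d > 0" using d d1 by simp
    have lnC: "ln C \<ge> 0" using C by simp
    have "d < exp (- ln C / e)" using d r_def by simp
    hence "ln d < - ln C / e" using d by (metis ln_exp ln_less_cancel_iff exp_gt_zero)
    hence key: "ln C \<le> e * (- ln d)" using e by (simp add: field_simps)
    define t where "t = (1/C) * d"
    have t: "t > 0" using d C by (simp add: t_def)
    have lnt: "- ln t = - ln d + ln C" using d C by (simp add: t_def ln_mult ln_div)
    have bt: "b t \<ge> 0" using b0 t .
    have "a d \<le> b t" using ab[OF d(1)] by (simp add: t_def)
    hence "a d / - ln d \<le> b t / - ln d" using lnd by (intro divide_right_mono) auto
    also have "b t / - ln d \<le> b t / - ln t * (1 + e)"
    proof -
      have "- ln t \<le> (1 + e) * (- ln d)" using lnt key by (simp add: algebra_simps)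
      hence "b t * (- ln t) \<le> b t * ((1 + e) * (- ln d))" using bt by (simp add: mult_left_mono)
      moreover have "- ln t > 0" using lnt lnd lnC by simp
      ultimately show ?thesis using lnd by (simp add: field_simps)
    qed
    finally show "ereal (a d / - ln d) \<le> ereal (b ((1/C) * d) / - ln ((1/C) * d)) * ereal (1 + e)"
      by (simp add: t_def)
  qed
  thus ?thesis using r by (auto simp: eventually_at_right_field)
qed

lemma ev_nonneg:
  fixes b :: "real \<Rightarrow> real"
  assumes C: "C \<ge> 1" and b0: "\<And>d. d > 0 \<Longrightarrow> b d \<ge> 0"
  shows "eventually (\<lambda>d. 0 \<le> ereal (b ((1/C) * d) / - ln ((1/C) * d))) (at_right 0)"
proof -
  have "\<forall>d>0. d < 1 \<longrightarrow> 0 \<le> ereal (b ((1/C) * d) / - ln ((1/C) * d))"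
  proof (intro allI impI)
    fix d :: real assume d: "d > 0" "d < 1"
    have t: "(1/C) * d > 0" "(1/C) * d < 1" using d C by (auto simp: field_simps)
    hence "- ln ((1/C) * d) > 0" by simp
    hence "0 \<le> b ((1/C) * d) / - ln ((1/C) * d)" using b0[OF t(1)] by (intro divide_nonneg_pos)
    thus "0 \<le> ereal (b ((1/C) * d) / - ln ((1/C) * d))" by simp
  qed
  thus ?thesis by (auto simp: eventually_at_right_field intro!: exI[of _ 1])
qed

lemma eps_conclude:
  fixes X L :: ereal
  assumes L0: "L \<ge> 0" and H: "\<And>e. e > 0 \<Longrightarrow> X \<le> L * ereal (1 + e)"
  shows "X \<le> L"
proof (cases L)
  case PInf thus ?thesis by simp
next
  case MInf thus ?thesis using L0 by simp
next
  case (real l)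
  have l: "l \<ge> 0" using L0 real by simp
  show ?thesis
  proof (rule ereal_le_epsilon2)
    fix e :: real assume e: "e > 0"
    have "X \<le> ereal (l * (1 + e / (l + 1)))" using H[of "e / (l+1)"] e l real by simp
    also have "l * (1 + e / (l + 1)) \<le> l + e"
    proof -
      have "l * (e / (l + 1)) \<le> e" using l e by (simp add: field_simps)
      thus ?thesis by (simp add: algebra_simps)
    qed
    finally show "X \<le> L + ereal e" using real by simp
  qed
qed

lemma limsup_compare:
  fixes a b :: "real \<Rightarrow> real"
  assumes C: "C \<ge> 1" and ab: "\<And>d. d > 0 \<Longrightarrow> a d \<le> b (d / C)" and b0: "\<And>d. d > 0 \<Longrightarrow> b d \<ge> 0"
  shows "Limsup (at_right 0) (\<lambda>d. ereal (a d / - ln d)) \<le> Limsup (at_right 0) (\<lambda>d. ereal (b d / - ln d))"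
    and "Liminf (at_right 0) (\<lambda>d. ereal (a d / - ln d)) \<le> Liminf (at_right 0) (\<lambda>d. ereal (b d / - ln d))"
proof -
  have Cp: "1/C > 0" using C by simp
  have fm: "filtermap ((*) (1/C)) (at_right (0::real)) = at_right 0"
    using filtermap_times_pos_at_right[OF Cp, of 0] by simp
  have inj: "inj ((*) (1/C) :: real \<Rightarrow> real)" using Cp by (auto intro: injI)
  define \<psi> where "\<psi> = (\<lambda>d. ereal (b ((1/C) * d) / - ln ((1/C) * d)))"
  have eqS: "Limsup (at_right 0) (\<lambda>d. ereal (b d / - ln d)) = Limsup (at_right 0) \<psi>"
    unfolding \<psi>_def using Limsup_filtermap_eq[OF inj, of "at_right 0" "\<lambda>d. ereal (b d / - ln d)"] fm by simp
  have eqI: "Liminf (at_right 0) (\<lambda>d. ereal (b d / - ln d)) = Liminf (at_right 0) \<psi>"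
    unfolding \<psi>_def using Liminf_filtermap_eq[OF inj, of "at_right 0" "\<lambda>d. ereal (b d / - ln d)"] fm by simp
  have nn: "eventually (\<lambda>d. 0 \<le> \<psi> d) (at_right 0)" unfolding \<psi>_def by (rule ev_nonneg[where b=b, OF C b0])
  have I0: "0 \<le> Liminf (at_right 0) \<psi>" using nn by (rule Liminf_bounded)
  have S0: "0 \<le> Limsup (at_right 0) \<psi>"
    using I0 Liminf_le_Limsup[of "at_right (0::real)" \<psi>] by simp
  show "Limsup (at_right 0) (\<lambda>d. ereal (a d / - ln d)) \<le> Limsup (at_right 0) (\<lambda>d. ereal (b d / - ln d))"
    unfolding eqS
  proof (rule eps_conclude[OF S0])
    fix e :: real assume e: "e > 0"
    have "Limsup (at_right 0) (\<lambda>d. ereal (a d / - ln d)) \<le> Limsup (at_right 0) (\<lambda>d. \<psi> d * ereal (1 + e))"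
      by (rule Limsup_mono) (unfold \<psi>_def, rule ev_factor[where a=a and b=b, OF C ab b0 e])
    also have "\<dots> = Limsup (at_right 0) \<psi> * ereal (1 + e)"
      using e by (intro Limsup_ereal_mult_right) auto
    finally show "Limsup (at_right 0) (\<lambda>d. ereal (a d / - ln d)) \<le> Limsup (at_right 0) \<psi> * ereal (1 + e)" .
  qed
  show "Liminf (at_right 0) (\<lambda>d. ereal (a d / - ln d)) \<le> Liminf (at_right 0) (\<lambda>d. ereal (b d / - ln d))"
    unfolding eqI
  proof (rule eps_conclude[OF I0])
    fix e :: real assume e: "e > 0"
    have "Liminf (at_right 0) (\<lambda>d. ereal (a d / - ln d)) \<le> Liminf (at_right 0) (\<lambda>d. \<psi> d * ereal (1 + e))"
      by (rule Liminf_mono) (unfold \<psi>_def, rule ev_factor[where a=a and b=b, OF C ab b0 e])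
    also have "\<dots> = Liminf (at_right 0) \<psi> * ereal (1 + e)"
      using e by (intro Liminf_ereal_mult_right) auto
    finally show "Liminf (at_right 0) (\<lambda>d. ereal (a d / - ln d)) \<le> Liminf (at_right 0) \<psi> * ereal (1 + e)" .
  qed
qed



lemma lip_bounded:
  fixes f :: "'a::real_normed_vector \<Rightarrow> 'b::real_normed_vector"
  assumes C: "C > 0" and L: "\<And>x y. dist (f x) (f y) \<le> C * dist x y" and U: "bounded U"
  shows "bounded (f ` U)"
proof -
  obtain x e where xe: "\<forall>y\<in>U. dist x y \<le> e" using U unfolding bounded_def by blast
  have "\<forall>y\<in>U. dist (f x) (f y) \<le> C * e"
    using xe L C by (meson mult_left_mono less_imp_le order_trans)
  thus ?thesis unfolding bounded_def by blast
qed

lemma lip_diameter: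
  fixes f :: "'a::real_normed_vector \<Rightarrow> 'b::real_normed_vector"
  assumes C: "C > 0" and L: "\<And>x y. dist (f x) (f y) \<le> C * dist x y" and U: "bounded U"
  shows "diameter (f ` U) \<le> C * diameter U"
proof (rule diameter_le)
  show "f ` U \<noteq> {} \<or> 0 \<le> C * diameter U" using C diameter_ge_0[OF U] by simp
  fix x y assume "x \<in> f ` U" "y \<in> f ` U"
  then obtain x' y' where "x' \<in> U" "y' \<in> U" "x = f x'" "y = f y'" by blast
  hence "norm (x - y) \<le> C * dist x' y'" using L by (simp add: dist_norm)
  also have "\<dots> \<le> C * diameter U" using C diameter_bounded_bound[OF U \<open>x' \<in> U\<close> \<open>y' \<in> U\<close>] by simp
  finally show "norm (x - y) \<le> C * diameter U" .
qed

lemma hpre_zero: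
  fixes f :: "'a::real_normed_vector \<Rightarrow> 'b::real_normed_vector"
  assumes C: "C > 0" and L: "\<And>x y. dist (f x) (f y) \<le> C * dist x y" and AB: "A \<subseteq> f ` B"
    and s: "s \<ge> 0" and z: "hausdorff_pre s \<delta> B = 0"
  shows "hausdorff_pre s (C * \<delta>) A = 0"
proof -
  have key: "hausdorff_pre s (C * \<delta>) A \<le> ennreal (C powr s) * (\<Sum>i. ennreal (diameter (U i) powr s))"
    if U: "B \<subseteq> (\<Union>i. U i)" "\<forall>i. bounded (U i) \<and> diameter (U i) \<le> \<delta>" for U
  proof -
    define V where "V i = f ` U i" for i
    have bV: "\<And>i. bounded (V i)" using lip_bounded[OF C L] U(2) by (simp add: V_def)
    have dV: "\<And>i. diameter (V i) \<le> C * diameter (U i)" using lip_diameter[OF C L] U(2) by (simp add: V_def)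
    have c1: "A \<subseteq> (\<Union>i. V i)"
    proof
      fix x assume "x \<in> A"
      then obtain y where y: "y \<in> B" "x = f y" using AB by blast
      then obtain i where "y \<in> U i" using U(1) by blast
      hence "x \<in> V i" using y unfolding V_def by blast
      thus "x \<in> (\<Union>i. V i)" by blast
    qed
    have c2: "\<forall>i. bounded (V i) \<and> diameter (V i) \<le> C * \<delta>"
    proof
      fix i
      have "C * diameter (U i) \<le> C * \<delta>" using U(2) C by (simp add: mult_left_mono)
      thus "bounded (V i) \<and> diameter (V i) \<le> C * \<delta>" using bV dV[of i] by simp
    qed
    have "hausdorff_pre s (C * \<delta>) A \<le> (\<Sum>i. ennreal (diameter (V i) powr s))"
      unfolding hausdorff_pre_def by (rule INF_lower) (simp only: mem_Collect_eq c1 c2 simp_thms)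
    also have "\<dots> \<le> (\<Sum>i. ennreal (C powr s) * ennreal (diameter (U i) powr s))"
    proof (rule suminf_le[OF _ summableI summableI])
      fix i
      have "diameter (V i) powr s \<le> (C * diameter (U i)) powr s"
        using powr_mono2[OF s diameter_ge_0[OF bV] dV] .
      also have "\<dots> = C powr s * diameter (U i) powr s"
        using C diameter_ge_0[of "U i"] U(2) by (simp add: powr_mult)
      finally have "diameter (V i) powr s \<le> C powr s * diameter (U i) powr s" .
      hence "ennreal (diameter (V i) powr s) \<le> ennreal (C powr s * diameter (U i) powr s)"
        by (rule ennreal_leI)
      also have "\<dots> = ennreal (C powr s) * ennreal (diameter (U i) powr s)"
        by (rule ennreal_mult) simp_all
      finally show "ennreal (diameter (V i) powr s) \<le> ennreal (C powr s) * ennreal (diameter (U i) powr s)" .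
    qed
    also have "\<dots> = ennreal (C powr s) * (\<Sum>i. ennreal (diameter (U i) powr s))" by simp
    finally show ?thesis .
  qed
  have "hausdorff_pre s (C * \<delta>) A \<le> 0"
  proof (rule ennreal_le_epsilon)
    fix e :: real assume e: "e > 0"
    have cp: "C powr s > 0" using C by simp
    have "0 < e / C powr s" using e cp by simp
    hence "hausdorff_pre s \<delta> B < ennreal (e / C powr s)" unfolding z by simp
    hence "\<exists>U\<in>{U. B \<subseteq> (\<Union>i. U i) \<and> (\<forall>i. bounded (U i) \<and> diameter (U i) \<le> \<delta>)}.
       (\<Sum>i. ennreal (diameter (U i) powr s)) < ennreal (e / C powr s)"
      unfolding hausdorff_pre_def by (simp only: INF_less_iff)
    then obtain U where U: "B \<subseteq> (\<Union>i. U i)" "\<forall>i. bounded (U i) \<and> diameter (U i) \<le> \<delta>"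
      and lt: "(\<Sum>i. ennreal (diameter (U i) powr s)) < ennreal (e / C powr s)"
      by auto
    have "hausdorff_pre s (C * \<delta>) A \<le> ennreal (C powr s) * (\<Sum>i. ennreal (diameter (U i) powr s))"
      using key[OF U] .
    also have "\<dots> \<le> ennreal (C powr s) * ennreal (e / C powr s)"
      using lt by (intro mult_left_mono) auto
    also have "\<dots> = ennreal (C powr s * (e / C powr s))"
      by (rule ennreal_mult[symmetric]) (use cp e in simp_all)
    also have "\<dots> = ennreal e" using cp by simp
    finally show "hausdorff_pre s (C * \<delta>) A \<le> 0 + ennreal e" by simp
  qed
  thus ?thesis by simp
qed

lemma hdim_lip:
  fixes f :: "'a::real_normed_vector \<Rightarrow> 'b::real_normed_vector"
  assumes C: "C > 0" and L: "\<And>x y. dist (f x) (f y) \<le> C * dist x y" and AB: "A \<subseteq> f ` B"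
  shows "hausdorff_dim A \<le> hausdorff_dim B"
  unfolding hausdorff_dim_def
proof (rule Inf_superset_mono, safe)
  fix s assume s: "0 \<le> s" and H: "hausdorff_measure s B = 0"
  have z: "hausdorff_pre s d B = 0" if "d > 0" for d
  proof -
    have "hausdorff_pre s d B \<le> hausdorff_measure s B" unfolding hausdorff_measure_def
      using that by (intro SUP_upper) auto
    thus ?thesis using H by simp
  qed
  have "hausdorff_measure s A = 0" unfolding hausdorff_measure_def
  proof (rule antisym[OF SUP_least], simp_all)
    fix d :: real assume d: "d > 0"
    have "hausdorff_pre s (C * (d / C)) A = 0"
      by (rule hpre_zero[OF C L AB s], rule z) (use C d in simp)
    thus "hausdorff_pre s d A = 0" using C by simp
  qed
  thus "\<exists>s'. ereal s = ereal s' \<and> 0 \<le> s' \<and> hausdorff_measure s' A = 0" using s by blast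
qed

lemma cover_lip:
  fixes f :: "'a::real_normed_vector \<Rightarrow> 'b::real_normed_vector"
  assumes C: "C > 0" and L: "\<And>x y. dist (f x) (f y) \<le> C * dist x y" and AB: "A \<subseteq> f ` B"
    and ex: "\<exists>F. finite F \<and> B \<subseteq> \<Union>F \<and> (\<forall>U\<in>F. bounded U \<and> diameter U \<le> \<delta>)"
  shows "cover_number (C * \<delta>) A \<le> cover_number \<delta> B"
proof -
  let ?S = "{card F | F. finite F \<and> B \<subseteq> \<Union>F \<and> (\<forall>U\<in>F. bounded U \<and> diameter U \<le> \<delta>)}"
  have "?S \<noteq> {}" using ex by blast
  hence "Inf ?S \<in> ?S" by (rule Inf_nat_def1)
  then obtain F where F: "finite F" "B \<subseteq> \<Union>F" "\<forall>U\<in>F. bounded U \<and> diameter U \<le> \<delta>"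
    "card F = cover_number \<delta> B" unfolding cover_number_def by auto
  let ?G = "(\<lambda>U. f ` U) ` F"
  have "finite ?G" using F by simp
  moreover have "A \<subseteq> \<Union>?G"
  proof
    fix x assume "x \<in> A"
    then obtain y where y: "y \<in> B" "x = f y" using AB by blast
    then obtain U where "U \<in> F" "y \<in> U" using F(2) by blast
    thus "x \<in> \<Union>?G" using y by blast
  qed
  moreover have "\<forall>V\<in>?G. bounded V \<and> diameter V \<le> C * \<delta>"
  proof
    fix V assume "V \<in> ?G"
    then obtain U where U: "U \<in> F" "V = f ` U" by blast
    have "diameter V \<le> C * diameter U" using lip_diameter[OF C L] F(3) U by simp
    also have "\<dots> \<le> C * \<delta>" using F(3) U(1) C by (simp add: mult_left_mono)
    finally show "bounded V \<and> diameter V \<le> C * \<delta>" using lip_bounded[OF C L] F(3) U by simp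
  qed
  ultimately have "cover_number (C * \<delta>) A \<le> card ?G" unfolding cover_number_def
    by (intro cInf_lower) auto
  also have "\<dots> \<le> card F" using F(1) by (rule card_image_le)
  finally show ?thesis using F(4) by simp
qed

lemma compact_cover_ex:
  fixes B :: "'a::euclidean_space set"
  assumes "compact B" "\<delta> > 0"
  shows "\<exists>F. finite F \<and> B \<subseteq> \<Union>F \<and> (\<forall>U\<in>F. bounded U \<and> diameter U \<le> \<delta>)"
proof -
  have tb: "\<forall>\<epsilon>>0. \<exists>k. finite k \<and> B \<subseteq> (\<Union>x\<in>k. ball x \<epsilon>)"
    using assms(1) compact_eq_totally_bounded[of B] by simp
  have "\<delta>/2 > 0" using assms(2) by simp
  then obtain k where k: "finite k" "B \<subseteq> (\<Union>x\<in>k. ball x (\<delta>/2))"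
    using tb by blast
  have "\<forall>U\<in>(\<lambda>x. cball x (\<delta>/2)) ` k. bounded U \<and> diameter U \<le> \<delta>"
    using assms(2) by (auto simp: diameter_cball)
  moreover have "B \<subseteq> \<Union>((\<lambda>x. cball x (\<delta>/2)) ` k)"
  proof
    fix y assume "y \<in> B"
    then obtain x where "x \<in> k" "y \<in> ball x (\<delta>/2)" using k(2) by blast
    hence "x \<in> k" "y \<in> cball x (\<delta>/2)" by auto
    thus "y \<in> \<Union>((\<lambda>x. cball x (\<delta>/2)) ` k)" by blast
  qed
  moreover have "finite ((\<lambda>x. cball x (\<delta>/2)) ` k)" using k(1) by simp
  ultimately show ?thesis by (intro exI[of _ "(\<lambda>x. cball x (\<delta>/2)) ` k"]) simp
qed



lemma ln_nat_nonneg: "ln (real (n::nat)) \<ge> 0"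
  by (cases "n = 0") auto

lemma box_lip:
  fixes f :: "'a::euclidean_space \<Rightarrow> 'a"
  assumes C: "C \<ge> 1" and L: "\<And>x y. dist (f x) (f y) \<le> C * dist x y" and AB: "A \<subseteq> f ` B"
    and B: "compact B"
  shows "upper_box_dim A \<le> upper_box_dim B" "lower_box_dim A \<le> lower_box_dim B"
proof -
  define a where "a d = ln (real (cover_number d A))" for d
  define b where "b d = ln (real (cover_number d B))" for d
  have C0: "C > 0" using C by simp
  have ab: "a d \<le> b (d / C)" if d: "d > 0" for d
  proof -
    have "d / C > 0" using d C0 by simp
    hence "cover_number (C * (d / C)) A \<le> cover_number (d / C) B"
      by (intro cover_lip[OF C0 L AB] compact_cover_ex[OF B])
    hence le: "cover_number d A \<le> cover_number (d / C) B" using C0 by simp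
    show ?thesis
    proof (cases "cover_number d A = 0")
      case True thus ?thesis by (simp add: a_def b_def ln_nat_nonneg)
    next
      case False
      thus ?thesis using le unfolding a_def b_def by simp
    qed
  qed
  have b0: "b d \<ge> 0" if "d > 0" for d unfolding b_def by (rule ln_nat_nonneg)
  show "upper_box_dim A \<le> upper_box_dim B"
    using limsup_compare(1)[where a=a and b=b, OF C ab b0] unfolding upper_box_dim_def a_def b_def by simp
  show "lower_box_dim A \<le> lower_box_dim B"
    using limsup_compare(2)[where a=a and b=b, OF C ab b0] unfolding lower_box_dim_def a_def b_def by simp
qed

lemma covdim_empty: "n \<ge> -1 \<Longrightarrow> covdim_le {} n"
  unfolding covdim_le_def by (intro allI impI exI[of _ "{}"]) auto

lemma covdim_embed:
  fixes g :: "'a::metric_space \<Rightarrow> 'b::metric_space"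
  assumes S: "compact S" and gc: "continuous_on S g" and gi: "inj_on g S"
    and sub: "g ` S \<subseteq> S'" and cov: "covdim_le S' n" and n: "n \<ge> -1"
  shows "covdim_le S n"
proof (cases "S = {}")
  case True thus ?thesis using covdim_empty n by simp
next
  case False
  obtain g' where hom: "homeomorphism S (g ` S) g g'"
    using homeomorphism_compact[OF S gc refl gi] by blast
  have sub': "g \<in> S \<rightarrow> S'" using sub by auto
  have cl: "closed (g ` S)" using compact_continuous_image[OF gc S] by (simp add: compact_imp_closed)
  show ?thesis unfolding covdim_le_def
  proof (intro allI impI)
    fix \<U> :: "'a set set"
    assume U: "finite \<U> \<and> (\<forall>U\<in>\<U>. openin (top_of_set S) U) \<and> S \<subseteq> \<Union>\<U>"
    have "\<forall>U\<in>\<U>. \<exists>Ob. open Ob \<and> g ` U = g ` S \<inter> Ob"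
    proof
      fix U assume "U \<in> \<U>"
      hence "openin (top_of_set S) U" using U by blast
      hence "openin (top_of_set (g ` S)) (g ` U)" by (rule homeomorphism_imp_open_map[OF hom])
      thus "\<exists>Ob. open Ob \<and> g ` U = g ` S \<inter> Ob" by (auto simp: openin_open)
    qed
    then obtain W where W: "\<And>U. U \<in> \<U> \<Longrightarrow> open (W U) \<and> g ` U = g ` S \<inter> W U" by metis
    define \<U>' where "\<U>' = insert (S' \<inter> (- (g ` S))) ((\<lambda>U. S' \<inter> W U) ` \<U>)"
    have fU': "finite \<U>'" using U by (simp add: \<U>'_def)
    have oU': "\<forall>U\<in>\<U>'. openin (top_of_set S') U"
      using W cl unfolding \<U>'_def by (auto intro: openin_open_Int)
    have cU': "S' \<subseteq> \<Union>\<U>'"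
    proof
      fix y assume y: "y \<in> S'"
      show "y \<in> \<Union>\<U>'"
      proof (cases "y \<in> g ` S")
        case False thus ?thesis using y unfolding \<U>'_def by blast
      next
        case True
        then obtain x where x: "x \<in> S" "y = g x" by blast
        then obtain U where Ux: "U \<in> \<U>" "x \<in> U" using U by blast
        hence "y \<in> W U" using W x by blast
        thus ?thesis using y Ux unfolding \<U>'_def by blast
      qed
    qed
    have ex: "\<exists>\<V>'. finite \<V>' \<and> (\<forall>V\<in>\<V>'. openin (top_of_set S') V) \<and> S' \<subseteq> \<Union>\<V>' \<and>
      (\<forall>V\<in>\<V>'. \<exists>U\<in>\<U>'. V \<subseteq> U) \<and> (\<forall>x\<in>S'. card {V\<in>\<V>'. x \<in> V} \<le> nat (n + 1))"
      by (rule cov[unfolded covdim_le_def, rule_format]) (intro conjI fU' oU' cU')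
    obtain \<V>' where V'all: "finite \<V>' \<and> (\<forall>V\<in>\<V>'. openin (top_of_set S') V) \<and> S' \<subseteq> \<Union>\<V>' \<and>
      (\<forall>V\<in>\<V>'. \<exists>U\<in>\<U>'. V \<subseteq> U) \<and> (\<forall>x\<in>S'. card {V\<in>\<V>'. x \<in> V} \<le> nat (n + 1))"
      using ex by (rule exE)
    have V': "finite \<V>'" "\<forall>V\<in>\<V>'. openin (top_of_set S') V" "S' \<subseteq> \<Union>\<V>'"
      "\<forall>V\<in>\<V>'. \<exists>U\<in>\<U>'. V \<subseteq> U" "\<forall>x\<in>S'. card {V\<in>\<V>'. x \<in> V} \<le> nat (n + 1)"
      using V'all by simp_all
    define pb where "pb V = S \<inter> g -` V" for V
    define \<V> where "\<V> = pb ` \<V>'"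
    have "finite \<V>" using V'(1) by (simp add: \<V>_def)
    moreover have "\<forall>V\<in>\<V>. openin (top_of_set S) V"
    proof
      fix V assume "V \<in> \<V>"
      then obtain V0 where V0: "V0 \<in> \<V>'" "V = pb V0" by (auto simp: \<V>_def)
      show "openin (top_of_set S) V" unfolding V0(2) pb_def
        using continuous_openin_preimage[OF gc sub'] V'(2) V0(1) by blast
    qed
    moreover have "S \<subseteq> \<Union>\<V>"
    proof
      fix x assume x: "x \<in> S"
      then obtain V where "V \<in> \<V>'" "g x \<in> V" using V'(3) sub by blast
      thus "x \<in> \<Union>\<V>" using x unfolding \<V>_def pb_def by blast
    qed
    moreover have "\<forall>V\<in>\<V>. \<exists>U\<in>\<U>. V \<subseteq> U"
    proof
      fix V assume "V \<in> \<V>"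
      then obtain V0 where V0: "V0 \<in> \<V>'" "V = pb V0" by (auto simp: \<V>_def)
      obtain U0 where U0: "U0 \<in> \<U>'" "V0 \<subseteq> U0" using V'(4) V0(1) by blast
      obtain x0 where x0: "x0 \<in> S" using False by blast
      then obtain Ux where Ux: "Ux \<in> \<U>" using U by blast
      show "\<exists>U\<in>\<U>. V \<subseteq> U"
      proof (cases "U0 = S' \<inter> (- (g ` S))")
        case True
        hence "V = {}" using U0 V0 unfolding pb_def by blast
        thus ?thesis using Ux by blast
      next
        case False
        then obtain U where U: "U \<in> \<U>" "U0 = S' \<inter> W U" using U0(1) unfolding \<U>'_def by blast
        have "V \<subseteq> U"
        proof
          fix x assume "x \<in> V"
          hence x: "x \<in> S" "g x \<in> W U" using V0 U0 U unfolding pb_def by auto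
          hence "g x \<in> g ` U" using W[OF U(1)] by blast
          then obtain x' where "x' \<in> U" "g x = g x'" by blast
          moreover have "x' \<in> S" using \<open>x' \<in> U\<close> U(1) \<open>finite \<U> \<and> _\<close>
            by (meson openin_imp_subset subsetD)
          ultimately show "x \<in> U" using gi x(1) by (metis inj_onD)
        qed
        thus ?thesis using U(1) by blast
      qed
    qed
    moreover have "\<forall>x\<in>S. card {V\<in>\<V>. x \<in> V} \<le> nat (n + 1)"
    proof
      fix x assume x: "x \<in> S"
      have "{V\<in>\<V>. x \<in> V} \<subseteq> pb ` {V\<in>\<V>'. g x \<in> V}" unfolding \<V>_def pb_def by auto
      hence "card {V\<in>\<V>. x \<in> V} \<le> card (pb ` {V\<in>\<V>'. g x \<in> V})"
        using V'(1) by (intro card_mono) auto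
      also have "\<dots> \<le> card {V\<in>\<V>'. g x \<in> V}" using V'(1) by (intro card_image_le) auto
      also have "\<dots> \<le> nat (n + 1)" using V'(5) x sub by blast
      finally show "card {V\<in>\<V>. x \<in> V} \<le> nat (n + 1)" .
    qed
    ultimately show "\<exists>\<V>. finite \<V> \<and> (\<forall>V\<in>\<V>. openin (top_of_set S) V) \<and> S \<subseteq> \<Union>\<V> \<and>
             (\<forall>V\<in>\<V>. \<exists>U\<in>\<U>. V \<subseteq> U) \<and> (\<forall>x\<in>S. card {V\<in>\<V>. x \<in> V} \<le> nat (n + 1))"
      by blast
  qed
qed

lemma topdim_embed:
  fixes g :: "'a::metric_space \<Rightarrow> 'b::metric_space"
  assumes S: "compact S" and gc: "continuous_on S g" and gi: "inj_on g S" and sub: "g ` S \<subseteq> S'"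
  shows "topological_dim S \<le> topological_dim S'"
  unfolding topological_dim_def
  by (rule Inf_superset_mono) (use covdim_embed[OF S gc gi sub] in blast)




theorem proposition8p1:
  fixes M :: "real^'n^'n" and m :: nat and k :: "nat \<Rightarrow> real^'n"
    and T :: "(real^'n) set" and u v :: "real^'n"
  assumes tile: "self_affine_lattice_tile M m k T"
    and u: "u \<in> nb_vertices T - {0}" and v: "v \<in> nb_vertices T - {0}"
    and uv: "nb_succ M m k T u v"
  shows "topological_dim (Bset T u) \<ge> topological_dim (Bset T v)
       \<and> hausdorff_dim (Bset T u) \<ge> hausdorff_dim (Bset T v)
       \<and> upper_box_dim (Bset T u) \<ge> upper_box_dim (Bset T v)
       \<and> lower_box_dim (Bset T u) \<ge> lower_box_dim (Bset T v)
       \<and> (is_face T v \<longrightarrow> is_face T u)"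
proof -
  obtain g where g: "aff g" "g ` T \<subseteq> T" "g ` translate T v \<subseteq> translate T u"
    using path_map[OF tile uv] by blast
  obtain h C where hC: "C \<ge> 1" "\<forall>x y. dist (h x) (h y) \<le> C * dist x y" "\<forall>x. h (g x) = x"
    "continuous_on UNIV g" using aff_inv[OF g(1)] by blast
  have cT: "compact T" using tile unfolding self_affine_lattice_tile_def by blast
  have cpt: "compact (Bset T w)" for w
  proof -
    have "compact (translate T w)" unfolding translate_def
      by (rule compact_continuous_image[OF _ cT]) (intro continuous_intros)
    thus ?thesis unfolding Bset_def using cT by (simp add: compact_Int)
  qed
  have sub: "g ` Bset T v \<subseteq> Bset T u" using g(2,3) unfolding Bset_def by blast
  have sub2: "Bset T v \<subseteq> h ` Bset T u"
  proof
    fix x assume "x \<in> Bset T v"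
    hence "g x \<in> Bset T u" using sub by blast
    thus "x \<in> h ` Bset T u" using hC(3) by (metis image_eqI)
  qed
  have L: "\<And>x y. dist (h x) (h y) \<le> C * dist x y" using hC(2) by blast
  have C0: "C > 0" using hC(1) by simp
  have td: "topological_dim (Bset T v) \<le> topological_dim (Bset T u)"
  proof (rule topdim_embed[OF cpt _ _ sub])
    show "continuous_on (Bset T v) g" using hC(4) by (rule continuous_on_subset) simp
    show "inj_on g (Bset T v)" using hC(3) by (metis inj_onI)
  qed
  have hd: "hausdorff_dim (Bset T v) \<le> hausdorff_dim (Bset T u)" by (rule hdim_lip[OF C0 L sub2])
  note bd = box_lip[OF hC(1) L sub2 cpt]
  have face: "is_face T v \<longrightarrow> is_face T u" using face_part[OF tile _ g] u by blast
  show ?thesis using td hd bd face by simp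
qed


end
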